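(* Let $\alpha_i,\beta_i,\gamma_i$ ($i=1,2,3$) be real numbers such that $$\operatorname{Rank}\begin{pmatrix}\alpha_1&\beta_1&\gamma_1&0&0&0\\ \alpha_2&\beta_2&\gamma_2&0&0&0\\ 0&0&0&\alpha_3&\beta_3&\gamma_3\end{pmatrix}=3,$$ and let $B_1[u]=\alpha_1u(0)+\beta_1u'(0)+\gamma_1u''(0)$, $B_2[u]=\alpha_2u(0)+\beta_2u'(0)+\gamma_2u''(0)$, $B_3[u]=\alpha_3u(1)+\beta_3u'(1)+\gamma_3u''(1)$. Assume the problem $u'''=\varphi$ on $(0,1)$, $B_1[u]=B_2[u]=B_3[u]=0$ has a Green function $G(t,s)$, and that $G$ and $G_1=\partial G/\partial t$ each have constant sign on $[0,1]^2$. Let $G_2=\partial^2G/\partial t^2$ and $$M_0=\max_{0\le t\le1}\int_0^1|G(t,s)|ds,\quad M_1=\max_{0\le t\le1}\int_0^1|G_1(t,s)|ds,\quad M_2=\max_{0\le t\le1}\int_0^1|G_2(t,s)|ds.$$ For $M>0$ let $$\mathcal{D}_M^+=\{(t,x,y,z): 0\le t\le1,\ 0\le x\le M_0M,\ 0\le\sigma(G)\sigma(G_1)y\le M_1M,\ |z|\le M_2M\}.$$ Suppose there exist numbers $M>0$ and $L_0,L_1,L_2\ge0$ such that $f(t,x,y,z)$ is continuous on $\mathcal{D}_M^+$, $0\le\sigma(G)f(t,x,y,z)\le M$ for all $(t,x,y,z)\in\mathcal{D}_M^+$, $$|f(t,x_2,y_2,z_2)-f(t,x_1,y_1,z_1)|\le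 L_0|x_2-x_1|+L_1|y_2-y_1|+L_2|z_2-z_1|$$ for all $(t,x_i,y_i,z_i)\in\mathcal{D}_M^+$ ($i=1,2$), and $q:=L_0M_0+L_1M_1+L_2M_2<1$. Then the problem $$u'''(t)=f(t,u(t),u'(t),u''(t)),\ 0<t<1,\qquad B_1[u]=B_2[u]=B_3[u]=0$$ has a unique monotone nonnegative solution $u$ satisfying, for all $0\le t\le1$, $$0\le u(t)\le M_0M,\quad 0\le\sigma(G)\sigma(G_1)u'(t)\le M_1M,\quad |u''(t)|\le M_2M.$$
   Context: The Green function $G(t,s)$ of the linear problem $u'''=\varphi$, $B_1[u]=B_2[u]=B_3[u]=0$ is the function on $[0,1]^2$ such that for every $\varphi\in C[0,1]$ the unique solution is $u(t)=\int_0^1G(t,s)\varphi(s)ds$. For a function $H$ of constant sign on $[0,1]^2$, $\sigma(H)=1$ if $H\ge0$ there and $\sigma(H)=-1$ if $H\le0$ there. *)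

theory Defs
  imports "HOL-Analysis.Analysis"
begin

text \<open>Boundary coefficients are given as functions a b c :: nat => real, indexed by 1, 2, 3.
  The coefficient matrix of the boundary conditions (3 x 6).\<close>
definition bc_matrix :: "(nat \<Rightarrow> real) \<Rightarrow> (nat \<Rightarrow> real) \<Rightarrow> (nat \<Rightarrow> real) \<Rightarrow> real^6^3" where
  "bc_matrix a b c = vector
     [vector [a 1, b 1, c 1, 0, 0, 0],
      vector [a 2, b 2, c 2, 0, 0, 0],
      vector [0, 0, 0, a 3, b 3, c 3]]"

definition derivs2 :: "(real \<Rightarrow> real) \<Rightarrow> (real \<Rightarrow> real) \<Rightarrow> (real \<Rightarrow> real) \<Rightarrow> bool" where
  "derivs2 u u1 u2 \<longleftrightarrow>
     (\<forall>t\<in>{0..1}. (u has_real_derivative u1 t) (at t within {0..1}) \<and>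
                 (u1 has_real_derivative u2 t) (at t within {0..1}))"

definition bvp3_sol ::
  "(nat \<Rightarrow> real) \<Rightarrow> (nat \<Rightarrow> real) \<Rightarrow> (nat \<Rightarrow> real) \<Rightarrow> (real \<Rightarrow> real \<Rightarrow> real \<Rightarrow> real \<Rightarrow> real)
     \<Rightarrow> (real \<Rightarrow> real) \<Rightarrow> (real \<Rightarrow> real) \<Rightarrow> (real \<Rightarrow> real) \<Rightarrow> bool" where
  "bvp3_sol a b c F u u1 u2 \<longleftrightarrow>
     derivs2 u u1 u2 \<and> continuous_on {0..1} u2 \<and>
     (\<forall>t\<in>{0<..<1}. (u2 has_real_derivative F t (u t) (u1 t) (u2 t)) (at t)) \<and>
     a 1 * u 0 + b 1 * u1 0 + c 1 * u2 0 = 0 \<and>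
     a 2 * u 0 + b 2 * u1 0 + c 2 * u2 0 = 0 \<and>
     a 3 * u 1 + b 3 * u1 1 + c 3 * u2 1 = 0"

definition green3 ::
  "(nat \<Rightarrow> real) \<Rightarrow> (nat \<Rightarrow> real) \<Rightarrow> (nat \<Rightarrow> real) \<Rightarrow> (real \<Rightarrow> real \<Rightarrow> real) \<Rightarrow> bool" where
  "green3 a b c G \<longleftrightarrow>
     (\<forall>\<phi>. continuous_on {0..1} \<phi> \<longrightarrow>
        (\<exists>u u1 u2. bvp3_sol a b c (\<lambda>t x y z. \<phi> t) u u1 u2) \<and>
        (\<forall>u u1 u2. bvp3_sol a b c (\<lambda>t x y z. \<phi> t) u u1 u2 \<longrightarrow>
           (\<forall>t\<in>{0..1}. ((\<lambda>s. G t s * \<phi> s) has_integral u t) {0..1})))"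

definition const_sign :: "(real \<Rightarrow> real \<Rightarrow> real) \<Rightarrow> bool" where
  "const_sign H \<longleftrightarrow> (\<forall>t\<in>{0..1}. \<forall>s\<in>{0..1}. H t s \<ge> 0) \<or> (\<forall>t\<in>{0..1}. \<forall>s\<in>{0..1}. H t s \<le> 0)"

definition sigma :: "(real \<Rightarrow> real \<Rightarrow> real) \<Rightarrow> real" where
  "sigma H = (if \<forall>t\<in>{0..1}. \<forall>s\<in>{0..1}. H t s \<ge> 0 then 1 else -1)"

definition Mnorm :: "(real \<Rightarrow> real \<Rightarrow> real) \<Rightarrow> real" where
  "Mnorm H = (SUP t\<in>{0..1}. integral {0..1} (\<lambda>s. \<bar>H t s\<bar>))"

definition DMplus :: "real \<Rightarrow> real \<Rightarrow> real \<Rightarrow> real \<Rightarrow> real \<Rightarrow> real \<Rightarrow> (real \<times> real \<times> real \<times> real) set" where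
  "DMplus M0 M1 M2 sG sG1 M = {(t, x, y, z). 0 \<le> t \<and> t \<le> 1 \<and> 0 \<le> x \<and> x \<le> M0 * M \<and>
      0 \<le> sG * sG1 * y \<and> sG * sG1 * y \<le> M1 * M \<and> \<bar>z\<bar> \<le> M2 * M}"

end

theory Submission
  imports Defs
begin

lemma ae_zero_aux1:
  fixes h :: "real \<Rightarrow> real"
  assumes habs: "h absolutely_integrable_on {0..1}"
    and orth: "\<And>\<phi>. continuous_on {0..1} \<phi> \<Longrightarrow> ((\<lambda>s. h s * \<phi> s) has_integral 0) {0..1}"
    and x: "x \<in> {0..1}"
  shows "integral {0..x} h = 0"
proof -
  define \<phi> where "\<phi> n s = max 0 (min 1 (1 - real (Suc n) * (s - x)))" for n s
  define g where "g s = (if s \<in> {..x} then h s else 0)" for s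
  have cont: "continuous_on {0..1} (\<phi> n)" for n
    unfolding \<phi>_def by (intro continuous_intros)
  have int: "(\<lambda>s. h s * \<phi> n s) integrable_on {0..1}" for n
    using orth[OF cont] by blast
  have hint: "(\<lambda>s. norm (h s)) integrable_on {0..1}"
    using habs absolutely_integrable_on_def by blast
  have le: "norm (h s * \<phi> n s) \<le> norm (h s)" for n s
    unfolding \<phi>_def by (auto simp: abs_mult intro!: mult_left_le)
  have conv: "(\<lambda>n. h s * \<phi> n s) \<longlonglongrightarrow> g s" for s
  proof (cases "s \<le> x")
    case True
    have "\<phi> n s = 1" for n
    proof -
      have "real (Suc n) * (s - x) \<le> 0" using True by (intro mult_nonneg_nonpos) auto
      then show ?thesis unfolding \<phi>_def by simp
    qed
    then show ?thesis using True by (simp add: g_def)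
  next
    case False
    then have sx: "s - x > 0" by simp
    obtain N :: nat where N: "1 / (s - x) < real N"
      using reals_Archimedean2 by blast
    have "\<phi> n s = 0" if "n \<ge> N" for n
    proof -
      have "1 < real N * (s - x)" using N sx by (simp add: field_simps)
      also have "\<dots> \<le> real (Suc n) * (s - x)" using that sx by (intro mult_right_mono) auto
      finally show ?thesis unfolding \<phi>_def by simp
    qed
    then have "\<forall>\<^sub>F n in sequentially. h s * \<phi> n s = g s"
      using False unfolding g_def eventually_sequentially by auto
    then show ?thesis by (rule tendsto_eventually)
  qed
  have "(\<lambda>n. integral {0..1} (\<lambda>s. h s * \<phi> n s)) \<longlonglongrightarrow> integral {0..1} g"
    by (rule dominated_convergence(2)[OF int hint le conv])
  moreover have "integral {0..1} (\<lambda>s. h s * \<phi> n s) = 0" for n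
    using orth[OF cont] by blast
  ultimately have "(\<lambda>n. (0::real)) \<longlonglongrightarrow> integral {0..1} g" by simp
  then have "integral {0..1} g = 0" using LIMSEQ_unique[OF tendsto_const] by metis
  moreover have "integral {0..1} g = integral {0..x} h"
    unfolding g_def integral_restrict_Int using x by (simp add: Int_atLeastAtMost Int_commute)
  ultimately show ?thesis by simp
qed

lemma ae_zero:
  fixes h :: "real \<Rightarrow> real"
  assumes habs: "h absolutely_integrable_on {0..1}"
    and orth: "\<And>\<phi>. continuous_on {0..1} \<phi> \<Longrightarrow> ((\<lambda>s. h s * \<phi> s) has_integral 0) {0..1}"
  shows "negligible {s\<in>{0..1}. h s \<noteq> 0}"
proof -
  define hh where "hh s = (if s \<in> {0..1} then h s else 0)" for s
  have hI: "h integrable_on {0..1}" using habs set_lebesgue_integral_eq_integral(1) by blast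
  have hhint: "hh integrable_on cbox a b" for a b
  proof -
    have "h integrable_on {max 0 a..min 1 b}"
      by (rule integrable_on_subinterval[OF hI]) auto
    then have "h integrable_on ({0..1} \<inter> cbox a b)" by (simp add: Int_atLeastAtMost)
    then show ?thesis unfolding hh_def by (subst integrable_restrict_Int) assumption
  qed
  have I0: "integral {0..y} hh = 0" if "y \<in> {0..1}" for y
  proof -
    have "integral {0..y} hh = integral {0..y} h"
      by (rule integral_cong) (use that in \<open>auto simp: hh_def\<close>)
    then show ?thesis using ae_zero_aux1[OF habs orth that] by simp
  qed
  obtain N where N: "negligible N"
    and Nprop: "\<And>x e. \<lbrakk>x \<notin> N; 0 < e\<rbrakk> \<Longrightarrow>
               \<exists>d>0. \<forall>h. 0 < h \<and> h < d \<longrightarrow>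
                         norm(integral (cbox x (x + h *\<^sub>R One)) hh /\<^sub>R h ^ DIM(real) - hh x) < e"
    using integrable_ccontinuous_explicit[of hh] hhint by blast
  have "{s\<in>{0..1}. h s \<noteq> 0} \<subseteq> N \<union> {1}"
  proof (rule subsetI, rule ccontr)
    fix x assume xin: "x \<in> {s\<in>{0..1}. h s \<noteq> 0}" and xn: "x \<notin> N \<union> {1}"
    then have x01: "0 \<le> x" "x < 1" and hx: "hh x \<noteq> 0" by (auto simp: hh_def)
    obtain d where d: "d > 0" and dprop: "\<forall>h. 0 < h \<and> h < d \<longrightarrow>
               norm(integral (cbox x (x + h *\<^sub>R One)) hh /\<^sub>R h ^ DIM(real) - hh x) < \<bar>hh x\<bar>"
      using Nprop[of x "\<bar>hh x\<bar>"] xn hx by auto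
    define \<delta> where "\<delta> = min (d/2) ((1 - x)/2)"
    have \<delta>: "0 < \<delta>" "\<delta> < d" "x + \<delta> \<le> 1" using d x01 unfolding \<delta>_def by (auto simp: min_def field_simps)
    have "integral {0..x} hh + integral {x..x+\<delta>} hh = integral {0..x+\<delta>} hh"
      by (rule Henstock_Kurzweil_Integration.integral_combine) (use x01 \<delta> hhint in auto)
    then have "integral {x..x+\<delta>} hh = 0" using I0[of x] I0[of "x+\<delta>"] x01 \<delta> by simp
    then have "norm(integral (cbox x (x + \<delta> *\<^sub>R One)) hh /\<^sub>R \<delta> ^ DIM(real) - hh x) = \<bar>hh x\<bar>"
      by simp
    with dprop \<delta> show False by auto
  qed
  moreover have "negligible (N \<union> {1})" using N by simp
  ultimately show ?thesis using negligible_subset by blast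
qed

definition Pint :: "(real \<Rightarrow> real) \<Rightarrow> nat \<Rightarrow> real \<Rightarrow> real" where
  "Pint \<phi> k t = integral {0..t} (\<lambda>s. s^k * \<phi> s)"

lemma Pint_0 [simp]: "Pint \<phi> k 0 = 0"
  by (simp add: Pint_def)

lemma Pint_deriv:
  assumes "continuous_on {0..1} \<phi>" "x \<in> {0..1}"
  shows "(Pint \<phi> k has_real_derivative x^k * \<phi> x) (at x within {0..1})"
  unfolding Pint_def
  by (rule integral_has_real_derivative) (use assms in \<open>auto intro!: continuous_intros\<close>)

lemma taylor3:
  fixes \<phi> u u1 u2 :: "real \<Rightarrow> real"
  assumes \<phi>: "continuous_on {0..1} \<phi>"
    and d: "derivs2 u u1 u2" and c2: "continuous_on {0..1} u2"
    and d3: "\<forall>t\<in>{0<..<1}. (u2 has_real_derivative \<phi> t) (at t)"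
    and t: "t \<in> {0..1}"
  shows "u2 t = u2 0 + Pint \<phi> 0 t"
    and "u1 t = u1 0 + u2 0 * t + (t * Pint \<phi> 0 t - Pint \<phi> 1 t)"
    and "u t = u 0 + u1 0 * t + u2 0 * t^2/2 + (t^2 * Pint \<phi> 0 t - 2*t*Pint \<phi> 1 t + Pint \<phi> 2 t)/2"
proof -
  have P2: "u2 x = u2 0 + Pint \<phi> 0 x" if x: "x \<in> {0..1}" for x
  proof -
    have "(\<phi> has_integral u2 x - u2 0) {0..x}"
    proof (rule fundamental_theorem_of_calculus_interior)
      show "0 \<le> x" using x by simp
      show "continuous_on {0..x} u2" by (rule continuous_on_subset[OF c2]) (use x in auto)
      fix y assume "y \<in> {0<..<x}"
      then have "y \<in> {0<..<1}" using x by auto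
      then show "(u2 has_vector_derivative \<phi> y) (at y)"
        using d3 by (simp add: has_real_derivative_iff_has_vector_derivative)
    qed
    then show ?thesis unfolding Pint_def by (simp add: integral_unique)
  qed
  show "u2 t = u2 0 + Pint \<phi> 0 t" by (rule P2[OF t])
  have du: "(u has_real_derivative u1 x) (at x within {0..1})" 
    and du1: "(u1 has_real_derivative u2 x) (at x within {0..1})" if "x \<in> {0..1}" for x
    using d that unfolding derivs2_def by auto
  have P1: "u1 x = u1 0 + u2 0 * x + (x * Pint \<phi> 0 x - Pint \<phi> 1 x)" if x: "x \<in> {0..1}" for x
  proof -
    have "\<exists>c. \<forall>x\<in>{0..1}. u1 x - (u1 0 + u2 0 * x + (x * Pint \<phi> 0 x - Pint \<phi> 1 x)) = c"
    proof (rule has_field_derivative_zero_constant)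
      fix x :: real assume x: "x \<in> {0..1}"
      show "((\<lambda>x. u1 x - (u1 0 + u2 0 * x + (x * Pint \<phi> 0 x - Pint \<phi> 1 x))) has_real_derivative 0) (at x within {0..1})"
        using P2[OF x] by (auto intro!: derivative_eq_intros du1[OF x] Pint_deriv[OF \<phi> x])
    qed auto
    then obtain c where "\<forall>x\<in>{0..1}. u1 x - (u1 0 + u2 0 * x + (x * Pint \<phi> 0 x - Pint \<phi> 1 x)) = c" by blast
    from this[rule_format, of 0] this[rule_format, of x] x show ?thesis by simp
  qed
  show "u1 t = u1 0 + u2 0 * t + (t * Pint \<phi> 0 t - Pint \<phi> 1 t)" by (rule P1[OF t])
  have "\<exists>c. \<forall>x\<in>{0..1}. u x - (u 0 + u1 0 * x + u2 0 * x^2/2 + (x^2 * Pint \<phi> 0 x - 2*x*Pint \<phi> 1 x + Pint \<phi> 2 x)/2) = c"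
  proof (rule has_field_derivative_zero_constant)
    fix x :: real assume x: "x \<in> {0..1}"
    show "((\<lambda>x. u x - (u 0 + u1 0 * x + u2 0 * x^2/2 + (x^2 * Pint \<phi> 0 x - 2*x*Pint \<phi> 1 x + Pint \<phi> 2 x)/2)) has_real_derivative 0) (at x within {0..1})"
      using P1[OF x] by (auto intro!: derivative_eq_intros du[OF x] Pint_deriv[OF \<phi> x] simp: power2_eq_square field_simps)
  qed auto
  then obtain c where "\<forall>x\<in>{0..1}. u x - (u 0 + u1 0 * x + u2 0 * x^2/2 + (x^2 * Pint \<phi> 0 x - 2*x*Pint \<phi> 1 x + Pint \<phi> 2 x)/2) = c" by blast
  from this[rule_format, of 0] this[rule_format, of t] t
  show "u t = u 0 + u1 0 * t + u2 0 * t^2/2 + (t^2 * Pint \<phi> 0 t - 2*t*Pint \<phi> 1 t + Pint \<phi> 2 t)/2" by simp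
qed

lemma hi_eq: "(f has_integral i) S \<Longrightarrow> (\<And>x. f x = g x) \<Longrightarrow> i = j \<Longrightarrow> (g has_integral j) S"
proof -
  assume "(f has_integral i) S" "\<And>x. f x = g x" "i = j"
  moreover have "f = g" using \<open>\<And>x. f x = g x\<close> by (rule ext)
  ultimately show ?thesis by simp
qed

definition H0 :: "real \<Rightarrow> real \<Rightarrow> real" where "H0 t s = (if s \<le> t then (t - s)^2/2 else 0)"
definition H1 :: "real \<Rightarrow> real \<Rightarrow> real" where "H1 t s = (if s \<le> t then t - s else 0)"
definition H2 :: "real \<Rightarrow> real \<Rightarrow> real" where "H2 t s = (if s \<le> t then 1 else 0)"

lemma restrict_0t:
  fixes t :: real and f :: "real \<Rightarrow> real"
  assumes "(f has_integral i) {0..t}" "t \<in> {0..1}"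
  shows "((\<lambda>s. if s \<le> t then f s else 0) has_integral i) {0..1}"
proof -
  have "{..t} \<inter> {0..1} = {0..t}" using assms(2) by auto
  then have "((\<lambda>s. if s \<in> {..t} then f s else 0) has_integral i) {0..1}"
    using assms(1) by (simp only: has_integral_restrict_Int)
  then show ?thesis by simp
qed

lemma Pint_has_integral:
  assumes "continuous_on {0..1} \<phi>" "t \<in> {0..1}"
  shows "((\<lambda>s. s^k * \<phi> s) has_integral Pint \<phi> k t) {0..t}"
proof -
  have "{0..t} \<subseteq> {0..1}" using assms(2) by auto
  then have "continuous_on {0..t} (\<lambda>s. s^k * \<phi> s)"
    using assms(1) by (auto intro!: continuous_intros elim: continuous_on_subset)
  then show ?thesis unfolding Pint_def using integrable_continuous_real has_integral_integral by blast
qed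

lemma H0_int:
  assumes \<phi>: "continuous_on {0..1} \<phi>" and t: "t \<in> {0..1}"
  shows "((\<lambda>s. H0 t s * \<phi> s) has_integral (t^2 * Pint \<phi> 0 t - 2*t*Pint \<phi> 1 t + Pint \<phi> 2 t)/2) {0..1}"
proof -
  have "((\<lambda>s. t^2/2 * (s^0 * \<phi> s) - t * (s^1 * \<phi> s) + (s^2 * \<phi> s) / 2) has_integral
     t^2/2 * Pint \<phi> 0 t - t * Pint \<phi> 1 t + Pint \<phi> 2 t / 2) {0..t}"
    by (intro has_integral_add has_integral_diff has_integral_mult_right has_integral_divide
          Pint_has_integral[OF \<phi> t])
  then have "((\<lambda>s. (t - s)^2/2 * \<phi> s) has_integral (t^2 * Pint \<phi> 0 t - 2*t*Pint \<phi> 1 t + Pint \<phi> 2 t)/2) {0..t}"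
    by (rule hi_eq) (auto simp: power2_eq_square field_simps)
  from restrict_0t[OF this t] show ?thesis
    by (rule hi_eq) (auto simp: H0_def)
qed

lemma H1_int:
  assumes \<phi>: "continuous_on {0..1} \<phi>" and t: "t \<in> {0..1}"
  shows "((\<lambda>s. H1 t s * \<phi> s) has_integral (t * Pint \<phi> 0 t - Pint \<phi> 1 t)) {0..1}"
proof -
  have "((\<lambda>s. t * (s^0 * \<phi> s) - (s^1 * \<phi> s)) has_integral t * Pint \<phi> 0 t - Pint \<phi> 1 t) {0..t}"
    by (intro has_integral_diff has_integral_mult_right Pint_has_integral[OF \<phi> t])
  then have "((\<lambda>s. (t - s) * \<phi> s) has_integral (t * Pint \<phi> 0 t - Pint \<phi> 1 t)) {0..t}"
    by (rule hi_eq) (auto simp: field_simps)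
  from restrict_0t[OF this t] show ?thesis
    by (rule hi_eq) (auto simp: H1_def)
qed

lemma H2_int:
  assumes \<phi>: "continuous_on {0..1} \<phi>" and t: "t \<in> {0..1}"
  shows "((\<lambda>s. H2 t s * \<phi> s) has_integral Pint \<phi> 0 t) {0..1}"
proof -
  from restrict_0t[OF Pint_has_integral[OF \<phi> t, of 0] t] show ?thesis
    by (rule hi_eq) (auto simp: H2_def)
qed

lemma Hk_absint:
  assumes t: "t \<in> {0..1}"
  shows "H0 t absolutely_integrable_on {0..1}" "H1 t absolutely_integrable_on {0..1}"
    "H2 t absolutely_integrable_on {0..1}"
proof -
  have c: "continuous_on {0..1} (\<lambda>s::real. 1::real)" by simp
  have "(\<lambda>s. H0 t s * 1) integrable_on {0..1}" using H0_int[OF c t] by blast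
  then show "H0 t absolutely_integrable_on {0..1}"
    by (intro nonnegative_absolutely_integrable_1) (auto simp: H0_def[abs_def])
  have "(\<lambda>s. H1 t s * 1) integrable_on {0..1}" using H1_int[OF c t] by blast
  then show "H1 t absolutely_integrable_on {0..1}"
    by (intro nonnegative_absolutely_integrable_1) (auto simp: H1_def[abs_def])
  have "(\<lambda>s. H2 t s * 1) integrable_on {0..1}" using H2_int[OF c t] by blast
  then show "H2 t absolutely_integrable_on {0..1}"
    by (intro nonnegative_absolutely_integrable_1) (auto simp: H2_def[abs_def])
qed

definition k1 :: "(real \<Rightarrow> real \<Rightarrow> real) \<Rightarrow> real \<Rightarrow> real" where
  "k1 G s = G (1/2) s - G 0 s - H0 (1/2) s"
definition k2 :: "(real \<Rightarrow> real \<Rightarrow> real) \<Rightarrow> real \<Rightarrow> real" where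
  "k2 G s = G 1 s - G 0 s - H0 1 s"
definition KB :: "(real \<Rightarrow> real \<Rightarrow> real) \<Rightarrow> real \<Rightarrow> real" where
  "KB G s = 4 * k1 G s - k2 G s"
definition KC :: "(real \<Rightarrow> real \<Rightarrow> real) \<Rightarrow> real \<Rightarrow> real" where
  "KC G s = 4 * k2 G s - 8 * k1 G s"
definition Gs0 :: "(real \<Rightarrow> real \<Rightarrow> real) \<Rightarrow> real \<Rightarrow> real \<Rightarrow> real" where
  "Gs0 G t s = G 0 s + KB G s * t + KC G s * t^2/2 + H0 t s"
definition Gs1 :: "(real \<Rightarrow> real \<Rightarrow> real) \<Rightarrow> real \<Rightarrow> real \<Rightarrow> real" where
  "Gs1 G t s = KB G s + KC G s * t + H1 t s"
definition Gs2 :: "(real \<Rightarrow> real \<Rightarrow> real) \<Rightarrow> real \<Rightarrow> real \<Rightarrow> real" where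
  "Gs2 G t s = KC G s + H2 t s"

lemma rep_star:
  assumes green: "green3 a b c G" and \<phi>: "continuous_on {0..1} \<phi>"
    and sol: "bvp3_sol a b c (\<lambda>t x y z. \<phi> t) u u1 u2" and t: "t \<in> {0..1}"
  shows "((\<lambda>s. Gs0 G t s * \<phi> s) has_integral u t) {0..1}"
    and "((\<lambda>s. Gs1 G t s * \<phi> s) has_integral u1 t) {0..1}"
    and "((\<lambda>s. Gs2 G t s * \<phi> s) has_integral u2 t) {0..1}"
proof -
  have gi: "((\<lambda>s. G \<tau> s * \<phi> s) has_integral u \<tau>) {0..1}" if "\<tau> \<in> {0..1}" for \<tau>
    using green \<phi> sol that unfolding green3_def by blast
  have d: "derivs2 u u1 u2" and c2: "continuous_on {0..1} u2"
    and d3: "\<forall>t\<in>{0<..<1}. (u2 has_real_derivative \<phi> t) (at t)"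
    using sol unfolding bvp3_sol_def by auto
  note T = taylor3[OF \<phi> d c2 d3]
  define W where "W \<tau> = (\<tau>^2 * Pint \<phi> 0 \<tau> - 2*\<tau>*Pint \<phi> 1 \<tau> + Pint \<phi> 2 \<tau>)/2" for \<tau>
  have h12: "(1/2::real) \<in> {0..1}" and h1: "(1::real) \<in> {0..1}" and h0: "(0::real) \<in> {0..1}" by auto
  have Tm: "u (1/2) = u 0 + u1 0 * (1/2) + u2 0 * (1/2)^2/2 + W (1/2)"
    using T(3)[OF h12] unfolding W_def by simp
  have T1: "u 1 = u 0 + u1 0 + u2 0 /2 + W 1"
    using T(3)[OF h1] unfolding W_def by simp
  have ik1: "((\<lambda>s. k1 G s * \<phi> s) has_integral (u (1/2) - u 0 - W (1/2))) {0..1}"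
    using has_integral_diff[OF has_integral_diff[OF gi[OF h12] gi[OF h0]] H0_int[OF \<phi> h12]]
    by (rule hi_eq) (auto simp: k1_def W_def algebra_simps)
  have ik2: "((\<lambda>s. k2 G s * \<phi> s) has_integral (u 1 - u 0 - W 1)) {0..1}"
    using has_integral_diff[OF has_integral_diff[OF gi[OF h1] gi[OF h0]] H0_int[OF \<phi> h1]]
    by (rule hi_eq) (auto simp: k2_def W_def algebra_simps)
  have iB: "((\<lambda>s. KB G s * \<phi> s) has_integral u1 0) {0..1}"
    using has_integral_diff[OF has_integral_mult_right[OF ik1, of 4] ik2]
    by (rule hi_eq) (use Tm T1 in \<open>auto simp: KB_def algebra_simps power2_eq_square\<close>)
  have iC: "((\<lambda>s. KC G s * \<phi> s) has_integral u2 0) {0..1}"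
    using has_integral_diff[OF has_integral_mult_right[OF ik2, of 4] has_integral_mult_right[OF ik1, of 8]]
    by (rule hi_eq) (use Tm T1 in \<open>auto simp: KC_def algebra_simps power2_eq_square\<close>)
  show "((\<lambda>s. Gs0 G t s * \<phi> s) has_integral u t) {0..1}"
    using has_integral_add[OF has_integral_add[OF has_integral_add[OF gi[OF h0] has_integral_mult_left[OF iB, of t]]
       has_integral_mult_left[OF iC, of "t^2/2"]] H0_int[OF \<phi> t]]
    by (rule hi_eq) (use T(3)[OF t] in \<open>auto simp: Gs0_def algebra_simps\<close>)
  show "((\<lambda>s. Gs1 G t s * \<phi> s) has_integral u1 t) {0..1}"
    using has_integral_add[OF has_integral_add[OF iB has_integral_mult_left[OF iC, of t]] H1_int[OF \<phi> t]]
    by (rule hi_eq) (use T(2)[OF t] in \<open>auto simp: Gs1_def algebra_simps\<close>)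
  show "((\<lambda>s. Gs2 G t s * \<phi> s) has_integral u2 t) {0..1}"
    using has_integral_add[OF iC H2_int[OF \<phi> t]]
    by (rule hi_eq) (use T(1)[OF t] in \<open>auto simp: Gs2_def algebra_simps\<close>)
qed

lemma G_absint:
  assumes green: "green3 a b c G" and sg: "const_sign G" and \<tau>: "\<tau> \<in> {0..1}"
  shows "G \<tau> absolutely_integrable_on {0..1}"
proof -
  have c: "continuous_on {0..1} (\<lambda>s::real. 1::real)" by simp
  obtain u u1 u2 where "bvp3_sol a b c (\<lambda>t x y z. 1) u u1 u2"
    using green c unfolding green3_def by blast
  then have "((\<lambda>s. G \<tau> s * 1) has_integral u \<tau>) {0..1}"
    using green c \<tau> unfolding green3_def by blast
  then have gi: "G \<tau> integrable_on {0..1}" by auto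
  show ?thesis
  proof (cases "\<forall>t\<in>{0..1}. \<forall>s\<in>{0..1}. G t s \<ge> 0")
    case True
    then show ?thesis using \<tau> by (intro nonnegative_absolutely_integrable_1[OF gi]) auto
  next
    case False
    then have nonpos: "\<forall>t\<in>{0..1}. \<forall>s\<in>{0..1}. G t s \<le> 0" using sg unfolding const_sign_def by auto
    have "(\<lambda>s. - G \<tau> s) integrable_on {0..1}" using gi by (rule integrable_neg)
    then have "(\<lambda>s. - G \<tau> s) absolutely_integrable_on {0..1}"
      using nonpos \<tau> by (intro nonnegative_absolutely_integrable_1) auto
    then have "(\<lambda>s. -1 * - G \<tau> s) absolutely_integrable_on {0..1}"
      by (intro set_integrable_mult_right)
    then show ?thesis by simp
  qed
qed

lemma Gs_absint:
  assumes green: "green3 a b c G" and sg: "const_sign G" and t: "t \<in> {0..1}"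
  shows "Gs0 G t absolutely_integrable_on {0..1}" "Gs1 G t absolutely_integrable_on {0..1}"
    "Gs2 G t absolutely_integrable_on {0..1}" "KB G absolutely_integrable_on {0..1}"
    "KC G absolutely_integrable_on {0..1}"
proof -
  have h12: "(1/2::real) \<in> {0..1}" and h1: "(1::real) \<in> {0..1}" and h0: "(0::real) \<in> {0..1}" by auto
  note GA = G_absint[OF green sg]
  have a1: "k1 G absolutely_integrable_on {0..1}"
    unfolding k1_def[abs_def] using GA[OF h12] GA[OF h0] Hk_absint(1)[OF h12] by auto
  have a2: "k2 G absolutely_integrable_on {0..1}"
    unfolding k2_def[abs_def] using GA[OF h1] GA[OF h0] Hk_absint(1)[OF h1] by auto
  show aB: "KB G absolutely_integrable_on {0..1}"
    unfolding KB_def[abs_def] using a1 a2 by (auto intro!: set_integrable_mult_right)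
  show aC: "KC G absolutely_integrable_on {0..1}"
    unfolding KC_def[abs_def] using a1 a2 by (auto intro!: set_integrable_mult_right)
  show "Gs0 G t absolutely_integrable_on {0..1}"
    unfolding Gs0_def[abs_def] using GA[OF h0] aB aC Hk_absint(1)[OF t]
    by (auto intro!: set_integrable_mult_left set_integral_add(1))
  show "Gs1 G t absolutely_integrable_on {0..1}"
    unfolding Gs1_def[abs_def] using aB aC Hk_absint(2)[OF t]
    by (auto intro!: set_integrable_mult_left set_integral_add(1))
  show "Gs2 G t absolutely_integrable_on {0..1}"
    unfolding Gs2_def[abs_def] using aC Hk_absint(3)[OF t]
    by (auto intro!: set_integral_add(1))
qed

lemma ae_G0:
  assumes green: "green3 a b c G" and sg: "const_sign G" and t: "t \<in> {0..1}"
  shows "negligible {s\<in>{0..1}. G t s \<noteq> Gs0 G t s}"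
proof -
  have "negligible {s\<in>{0..1}. G t s - Gs0 G t s \<noteq> 0}"
  proof (rule ae_zero)
    show "(\<lambda>s. G t s - Gs0 G t s) absolutely_integrable_on {0..1}"
      using G_absint[OF green sg t] Gs_absint(1)[OF green sg t] by auto
    fix \<phi> :: "real \<Rightarrow> real" assume \<phi>: "continuous_on {0..1} \<phi>"
    obtain u u1 u2 where sol: "bvp3_sol a b c (\<lambda>t x y z. \<phi> t) u u1 u2"
      using green \<phi> unfolding green3_def by blast
    have "((\<lambda>s. G t s * \<phi> s) has_integral u t) {0..1}"
      using green \<phi> sol t unfolding green3_def by blast
    from has_integral_diff[OF this rep_star(1)[OF green \<phi> sol t]]
    show "((\<lambda>s. (G t s - Gs0 G t s) * \<phi> s) has_integral 0) {0..1}"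
      by (rule hi_eq) (auto simp: algebra_simps)
  qed
  then show ?thesis by simp
qed

definition xs :: "real \<Rightarrow> nat \<Rightarrow> real" where
  "xs t n = t + (if t \<le> 1/2 then 1 else -1) / (real n + 2)"

lemma xs_props:
  assumes t: "t \<in> {0..1}"
  shows "xs t n \<in> {0..1}" "xs t n \<noteq> t" "xs t \<longlonglongrightarrow> t"
proof -
  define e where "e = 1 / (real n + 2)"
  have p: "0 < e" "e \<le> 1/2" by (auto simp: e_def field_simps)
  have xe: "xs t n = t + (if t \<le> 1/2 then e else -e)" by (simp add: xs_def e_def divide_minus_left)
  show "xs t n \<in> {0..1}" using t p unfolding xe by auto
  show "xs t n \<noteq> t" using p unfolding xe by auto
  have "(\<lambda>n. (if t \<le> 1/2 then 1 else -1) / (real n + 2)) \<longlonglongrightarrow> 0"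
    by real_asymp
  then have "(\<lambda>n. t + (if t \<le> 1/2 then 1 else -1) / (real n + 2)) \<longlonglongrightarrow> t + 0"
    by (intro tendsto_add tendsto_const)
  then show "xs t \<longlonglongrightarrow> t" unfolding xs_def[abs_def] by simp
qed

lemma deriv_seq_unique:
  fixes f g :: "real \<Rightarrow> real"
  assumes df: "(f has_real_derivative f') (at t within S)"
    and dg: "(g has_real_derivative g') (at t within S)"
    and x: "\<And>n. x n \<in> S" "\<And>n. x n \<noteq> t" "x \<longlonglongrightarrow> t"
    and eq: "\<And>n. f (x n) = g (x n)" "f t = g t"
  shows "f' = g'"
proof -
  have fl: "filterlim x (at t within S) sequentially"
    using x by (auto simp: filterlim_at)
  have 1: "((\<lambda>n. (f (x n) - f t) / (x n - t)) \<longlongrightarrow> f') sequentially"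
    using filterlim_compose[OF df[unfolded has_field_derivative_iff] fl] by simp
  have 2: "((\<lambda>n. (f (x n) - f t) / (x n - t)) \<longlongrightarrow> g') sequentially"
    using filterlim_compose[OF dg[unfolded has_field_derivative_iff] fl] eq by simp
  show ?thesis using LIMSEQ_unique[OF 1 2] .
qed

lemma H0_deriv:
  assumes "t \<noteq> s"
  shows "((\<lambda>t. H0 t s) has_real_derivative H1 t s) (at t)"
proof (cases "s < t")
  case True
  have d: "((\<lambda>t. (t - s)^2/2) has_real_derivative H1 t s) (at t)"
    using True by (auto intro!: derivative_eq_intros simp: power2_eq_square H1_def)
  show ?thesis
    by (rule has_field_derivative_transform_within_open[OF d, of "{s<..}"])
       (use True in \<open>auto simp: H0_def\<close>)
next
  case False
  then have st: "t < s" using assms by simp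
  have "((\<lambda>t. 0) has_real_derivative 0) (at t)" by simp
  then have d: "((\<lambda>t. 0) has_real_derivative H1 t s) (at t)" using st by (simp add: H1_def)
  show ?thesis
    by (rule has_field_derivative_transform_within_open[OF d, of "{..<s}"])
       (use st in \<open>auto simp: H0_def\<close>)
qed

lemma H1_deriv:
  assumes "t \<noteq> s"
  shows "((\<lambda>t. H1 t s) has_real_derivative H2 t s) (at t)"
proof (cases "s < t")
  case True
  have d: "((\<lambda>t. t - s) has_real_derivative H2 t s) (at t)"
    using True by (auto intro!: derivative_eq_intros simp: H2_def)
  show ?thesis
    by (rule has_field_derivative_transform_within_open[OF d, of "{s<..}"])
       (use True in \<open>auto simp: H1_def\<close>)
next
  case False
  then have st: "t < s" using assms by simp
  have "((\<lambda>t. 0) has_real_derivative 0) (at t)" by simp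
  then have d: "((\<lambda>t. 0) has_real_derivative H2 t s) (at t)" using st by (simp add: H2_def)
  show ?thesis
    by (rule has_field_derivative_transform_within_open[OF d, of "{..<s}"])
       (use st in \<open>auto simp: H1_def\<close>)
qed

lemma Gs0_deriv:
  assumes "t \<noteq> s"
  shows "((\<lambda>t. Gs0 G t s) has_real_derivative Gs1 G t s) (at t)"
  unfolding Gs0_def Gs1_def
  by (auto intro!: derivative_eq_intros H0_deriv[OF assms] simp: power2_eq_square)

lemma Gs1_deriv:
  assumes "t \<noteq> s"
  shows "((\<lambda>t. Gs1 G t s) has_real_derivative Gs2 G t s) (at t)"
  unfolding Gs1_def Gs2_def
  by (auto intro!: derivative_eq_intros H1_deriv[OF assms])

lemma ae_G1:
  assumes green: "green3 a b c G" and sg: "const_sign G" and t: "t \<in> {0..1}"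
    and G1: "\<And>t s. t \<in> {0..1} \<Longrightarrow> s \<in> {0..1} \<Longrightarrow>
               ((\<lambda>t. G t s) has_real_derivative G1 t s) (at t within {0..1})"
  shows "negligible {s\<in>{0..1}. G1 t s \<noteq> Gs1 G t s}"
proof -
  let ?N = "\<lambda>\<tau>. {s\<in>{0..1}. G \<tau> s \<noteq> Gs0 G \<tau> s}"
  have "{s\<in>{0..1}. G1 t s \<noteq> Gs1 G t s} \<subseteq> ?N t \<union> (\<Union>n. ?N (xs t n)) \<union> {t}"
  proof (rule subsetI, rule ccontr)
    fix s assume s: "s \<in> {s\<in>{0..1}. G1 t s \<noteq> Gs1 G t s}" and sn: "s \<notin> ?N t \<union> (\<Union>n. ?N (xs t n)) \<union> {t}"
    have "G1 t s = Gs1 G t s"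
    proof (rule deriv_seq_unique[OF G1[OF t] has_field_derivative_at_within[OF Gs0_deriv]])
      show "t \<noteq> s" using sn by auto
      show "s \<in> {0..1}" using s by auto
      show "xs t n \<in> {0..1}" "xs t n \<noteq> t" for n using xs_props[OF t] by auto
      show "xs t \<longlonglongrightarrow> t" using xs_props[OF t] by auto
      show "G (xs t n) s = Gs0 G (xs t n) s" for n using sn s by auto
      show "G t s = Gs0 G t s" using sn s by auto
    qed
    then show False using s by auto
  qed
  moreover have "negligible (?N t \<union> (\<Union>n. ?N (xs t n)) \<union> {t})"
    using ae_G0[OF green sg t] ae_G0[OF green sg xs_props(1)[OF t]]
    by (intro negligible_Un negligible_Union_nat) auto
  ultimately show ?thesis using negligible_subset by blast
qed

lemma ae_G2:
  assumes green: "green3 a b c G" and sg: "const_sign G" and t: "t \<in> {0..1}"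
    and G1: "\<And>t s. t \<in> {0..1} \<Longrightarrow> s \<in> {0..1} \<Longrightarrow>
               ((\<lambda>t. G t s) has_real_derivative G1 t s) (at t within {0..1})"
    and G2: "\<And>t s. t \<in> {0..1} \<Longrightarrow> s \<in> {0..1} \<Longrightarrow> t \<noteq> s \<Longrightarrow>
               ((\<lambda>t. G1 t s) has_real_derivative G2 t s) (at t within {0..1})"
  shows "negligible {s\<in>{0..1}. G2 t s \<noteq> Gs2 G t s}"
proof -
  let ?N = "\<lambda>\<tau>. {s\<in>{0..1}. G1 \<tau> s \<noteq> Gs1 G \<tau> s}"
  have "{s\<in>{0..1}. G2 t s \<noteq> Gs2 G t s} \<subseteq> ?N t \<union> (\<Union>n. ?N (xs t n)) \<union> {t}"
  proof (rule subsetI, rule ccontr)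
    fix s assume s: "s \<in> {s\<in>{0..1}. G2 t s \<noteq> Gs2 G t s}" and sn: "s \<notin> ?N t \<union> (\<Union>n. ?N (xs t n)) \<union> {t}"
    have ts: "t \<noteq> s" using sn by auto
    have "G2 t s = Gs2 G t s"
    proof (rule deriv_seq_unique[OF G2[OF t _ ts] has_field_derivative_at_within[OF Gs1_deriv[OF ts]]])
      show "s \<in> {0..1}" using s by auto
      show "xs t n \<in> {0..1}" "xs t n \<noteq> t" for n using xs_props[OF t] by auto
      show "xs t \<longlonglongrightarrow> t" using xs_props[OF t] by auto
      show "G1 (xs t n) s = Gs1 G (xs t n) s" for n using sn s by auto
      show "G1 t s = Gs1 G t s" using sn s by auto
    qed
    then show False using s by auto
  qed
  moreover have "negligible (?N t \<union> (\<Union>n. ?N (xs t n)) \<union> {t})"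
    using ae_G1[OF green sg t G1] ae_G1[OF green sg xs_props(1)[OF t] G1]
    by (intro negligible_Un negligible_Union_nat) auto
  ultimately show ?thesis using negligible_subset by blast
qed

lemma sigma_abs:
  assumes "const_sign H" "t \<in> {0..1}" "s \<in> {0..1}"
  shows "H t s = sigma H * \<bar>H t s\<bar>"
proof (cases "\<forall>t\<in>{0..1}. \<forall>s\<in>{0..1}. H t s \<ge> 0")
  case True
  then have "H t s \<ge> 0" using assms by auto
  then show ?thesis using True unfolding sigma_def by simp
next
  case False
  then have "H t s \<le> 0" using assms unfolding const_sign_def by auto
  moreover have "sigma H = -1" using False unfolding sigma_def by auto
  ultimately show ?thesis by simp
qed

lemma sigma_cases: "sigma H = 1 \<or> sigma H = -1"
  unfolding sigma_def by auto

lemma int_bounds: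
  fixes f K :: "real \<Rightarrow> real"
  assumes "(f has_integral A) S" "(\<lambda>s. \<bar>K s\<bar>) integrable_on S"
    "\<And>s. s \<in> S \<Longrightarrow> 0 \<le> f s \<and> f s \<le> \<bar>K s\<bar> * M"
  shows "0 \<le> A \<and> A \<le> integral S (\<lambda>s. \<bar>K s\<bar>) * M"
proof
  show "0 \<le> A" using has_integral_le[OF has_integral_0 assms(1)] assms(3) by auto
  have "((\<lambda>s. \<bar>K s\<bar> * M) has_integral integral S (\<lambda>s. \<bar>K s\<bar>) * M) S"
    using has_integral_mult_left[OF integrable_integral[OF assms(2)]] .
  then show "A \<le> integral S (\<lambda>s. \<bar>K s\<bar>) * M" using has_integral_le[OF assms(1)] assms(3) by auto
qed

lemma int_abs_bound:
  fixes f K :: "real \<Rightarrow> real"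
  assumes "(f has_integral A) S" "(\<lambda>s. \<bar>K s\<bar>) integrable_on S"
    "\<And>s. s \<in> S \<Longrightarrow> \<bar>f s\<bar> \<le> \<bar>K s\<bar> * M"
  shows "\<bar>A\<bar> \<le> integral S (\<lambda>s. \<bar>K s\<bar>) * M"
proof -
  have i: "((\<lambda>s. \<bar>K s\<bar> * M) has_integral integral S (\<lambda>s. \<bar>K s\<bar>) * M) S"
    using has_integral_mult_left[OF integrable_integral[OF assms(2)]] .
  have "A \<le> integral S (\<lambda>s. \<bar>K s\<bar>) * M" using has_integral_le[OF assms(1) i] assms(3) by force
  moreover have "- A \<le> integral S (\<lambda>s. \<bar>K s\<bar>) * M"
    using has_integral_le[OF has_integral_neg[OF assms(1)] i] assms(3) by force
  ultimately show ?thesis by linarith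
qed

lemma lip_generic:
  fixes K \<phi> \<psi> :: "real \<Rightarrow> real"
  assumes "((\<lambda>s. K s * \<phi> s) has_integral A) S" "((\<lambda>s. K s * \<psi> s) has_integral B) S"
    "(\<lambda>s. \<bar>K s\<bar>) integrable_on S" "\<And>s. s \<in> S \<Longrightarrow> \<bar>\<phi> s - \<psi> s\<bar> \<le> d"
    "integral S (\<lambda>s. \<bar>K s\<bar>) \<le> Mk" "0 \<le> d"
  shows "\<bar>A - B\<bar> \<le> Mk * d"
proof -
  have "\<bar>A - B\<bar> \<le> integral S (\<lambda>s. \<bar>K s\<bar>) * d"
  proof (rule int_abs_bound[OF has_integral_diff[OF assms(1,2)] assms(3)])
    fix s assume "s \<in> S"
    then have "\<bar>K s * \<phi> s - K s * \<psi> s\<bar> = \<bar>K s\<bar> * \<bar>\<phi> s - \<psi> s\<bar>"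
      by (simp add: abs_mult[symmetric] algebra_simps)
    also have "\<dots> \<le> \<bar>K s\<bar> * d" using assms(4)[OF \<open>s \<in> S\<close>] by (intro mult_left_mono) auto
    finally show "\<bar>K s * \<phi> s - K s * \<psi> s\<bar> \<le> \<bar>K s\<bar> * d" .
  qed
  also have "\<dots> \<le> Mk * d" using assms(5,6) by (intro mult_right_mono) auto
  finally show ?thesis .
qed

definition Gam :: "(real \<Rightarrow> real \<Rightarrow> real) \<Rightarrow> (real \<Rightarrow> real) \<Rightarrow> real \<Rightarrow> real" where
  "Gam H \<phi> t = integral {0..1} (\<lambda>s. H t s * \<phi> s)"

lemma H_le1:
  assumes "t \<in> {0..1}" "s \<in> {0..1}"
  shows "\<bar>H0 t s\<bar> \<le> 1" "\<bar>H1 t s\<bar> \<le> 1" "\<bar>H2 t s\<bar> \<le> 1"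
proof -
  have "(t - s)^2 \<le> 1" if "s \<le> t"
  proof -
    have "(t - s)^2 \<le> 1^2" using assms that by (intro power_mono) auto
    then show ?thesis by simp
  qed
  then show "\<bar>H0 t s\<bar> \<le> 1" unfolding H0_def by auto
  show "\<bar>H1 t s\<bar> \<le> 1" "\<bar>H2 t s\<bar> \<le> 1" using assms unfolding H1_def H2_def by auto
qed

lemma Mnorm_upper:
  assumes "\<And>t. t \<in> {0..1} \<Longrightarrow> integral {0..1} (\<lambda>s. \<bar>H t s\<bar>) \<le> B" "t \<in> {0..1}"
  shows "integral {0..1} (\<lambda>s. \<bar>H t s\<bar>) \<le> Mnorm H"
proof -
  have "bdd_above ((\<lambda>t. integral {0..1} (\<lambda>s. \<bar>H t s\<bar>)) ` {0..1})"
    by (rule bdd_aboveI2) (use assms(1) in auto)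
  then show ?thesis unfolding Mnorm_def by (rule cSUP_upper[OF assms(2)])
qed

lemma Mnorm_nonneg:
  assumes "\<And>t. t \<in> {0..1} \<Longrightarrow> integral {0..1} (\<lambda>s. \<bar>H t s\<bar>) \<le> B"
  shows "0 \<le> Mnorm H"
proof -
  have "0 \<le> integral {0..1} (\<lambda>s. \<bar>H 0 s\<bar>)"
  proof (cases "(\<lambda>s. \<bar>H 0 s\<bar>) integrable_on {0..1}")
    case True
    then show ?thesis by (rule integral_nonneg) auto
  next
    case False
    then show ?thesis by (simp add: not_integrable_integral)
  qed
  also have "\<dots> \<le> Mnorm H" by (rule Mnorm_upper[OF assms]) auto
  finally show ?thesis .
qed

lemma abs_t_le:
  fixes x t :: real assumes "t \<in> {0..1}"
  shows "\<bar>x * t\<bar> \<le> \<bar>x\<bar>" "\<bar>x * t^2/2\<bar> \<le> \<bar>x\<bar>"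
proof -
  show "\<bar>x * t\<bar> \<le> \<bar>x\<bar>" using assms by (auto simp: abs_mult intro!: mult_left_le)
  have "t^2 \<le> 1" using assms by (simp add: power_le_one)
  then have "t^2/2 \<le> 1" by simp
  have "\<bar>x * t^2/2\<bar> = \<bar>x\<bar> * (t^2/2)" by (simp add: abs_mult)
  also have "\<dots> \<le> \<bar>x\<bar> * 1" using \<open>t^2/2 \<le> 1\<close> by (intro mult_left_mono) auto
  finally show "\<bar>x * t^2/2\<bar> \<le> \<bar>x\<bar>" by simp
qed


lemma mono_from_deriv:
  fixes u u1 :: "real \<Rightarrow> real"
  assumes d: "\<And>x. x \<in> {0..1} \<Longrightarrow> (u has_real_derivative u1 x) (at x within {0..1})"
    and nn: "\<And>x. x \<in> {0..1} \<Longrightarrow> 0 \<le> u1 x"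
  shows "mono_on {0..1} u"
proof (rule mono_onI)
  fix r s :: real assume r: "r \<in> {0..1}" and s: "s \<in> {0..1}" and rs: "r \<le> s"
  have cu: "continuous_on {0..1} u" by (rule DERIV_continuous_on[OF d])
  show "u r \<le> u s"
  proof (rule DERIV_nonneg_imp_increasing_open[OF rs])
    fix z assume z: "r < z" "z < s"
    then have z01: "0 < z" "z < 1" using r s by auto
    have "(u has_real_derivative u1 z) (at z)"
      using d[of z] z01 by (simp add: at_within_Icc_at)
    then show "\<exists>y. (u has_real_derivative y) (at z) \<and> 0 \<le> y" using nn[of z] z01 by auto
  next
    show "continuous_on {r..s} u" by (rule continuous_on_subset[OF cu]) (use r s in auto)
  qed
qed

lemma antimono_from_deriv:
  fixes u u1 :: "real \<Rightarrow> real"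
  assumes d: "\<And>x. x \<in> {0..1} \<Longrightarrow> (u has_real_derivative u1 x) (at x within {0..1})"
    and np: "\<And>x. x \<in> {0..1} \<Longrightarrow> u1 x \<le> 0"
  shows "antimono_on {0..1} u"
proof -
  have "mono_on {0..1} (\<lambda>x. - u x)"
    by (rule mono_from_deriv[of _ "\<lambda>x. - u1 x"]) (use d np in \<open>auto intro: DERIV_minus\<close>)
  then show ?thesis unfolding monotone_on_def by auto
qed

context
  fixes a b c :: "nat \<Rightarrow> real" and G G1 G2 :: "real \<Rightarrow> real \<Rightarrow> real"
  assumes green: "green3 a b c G"
    and dG1: "\<And>t s. t \<in> {0..1} \<Longrightarrow> s \<in> {0..1} \<Longrightarrow>
               ((\<lambda>t. G t s) has_real_derivative G1 t s) (at t within {0..1})"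
    and dG2: "\<And>t s. t \<in> {0..1} \<Longrightarrow> s \<in> {0..1} \<Longrightarrow> t \<noteq> s \<Longrightarrow>
               ((\<lambda>t. G1 t s) has_real_derivative G2 t s) (at t within {0..1})"
    and signG: "const_sign G" and signG1: "const_sign G1"
begin

lemma sol_exists: "continuous_on {0..1} \<phi> \<Longrightarrow> \<exists>u u1 u2. bvp3_sol a b c (\<lambda>t x y z. \<phi> t) u u1 u2"
  using green unfolding green3_def by blast

lemma sol_rep:
  assumes \<phi>: "continuous_on {0..1} \<phi>" and sol: "bvp3_sol a b c (\<lambda>t x y z. \<phi> t) u u1 u2"
    and t: "t \<in> {0..1}"
  shows "((\<lambda>s. G t s * \<phi> s) has_integral u t) {0..1}"
    "((\<lambda>s. G1 t s * \<phi> s) has_integral u1 t) {0..1}"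
    "((\<lambda>s. G2 t s * \<phi> s) has_integral u2 t) {0..1}"
proof -
  show "((\<lambda>s. G t s * \<phi> s) has_integral u t) {0..1}"
    by (rule has_integral_spike[OF ae_G0[OF green signG t] _ rep_star(1)[OF green \<phi> sol t]]) auto
  show "((\<lambda>s. G1 t s * \<phi> s) has_integral u1 t) {0..1}"
    by (rule has_integral_spike[OF ae_G1[OF green signG t dG1] _ rep_star(2)[OF green \<phi> sol t]]) auto
  show "((\<lambda>s. G2 t s * \<phi> s) has_integral u2 t) {0..1}"
    by (rule has_integral_spike[OF ae_G2[OF green signG t dG1 dG2] _ rep_star(3)[OF green \<phi> sol t]]) auto
qed


lemma Gam_eq:
  assumes \<phi>: "continuous_on {0..1} \<phi>" and sol: "bvp3_sol a b c (\<lambda>t x y z. \<phi> t) u u1 u2"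
    and t: "t \<in> {0..1}"
  shows "Gam G \<phi> t = u t" "Gam G1 \<phi> t = u1 t" "Gam G2 \<phi> t = u2 t"
  unfolding Gam_def using sol_rep[OF assms] by (auto intro: integral_unique)

lemma Gam_has:
  assumes \<phi>: "continuous_on {0..1} \<phi>" and t: "t \<in> {0..1}"
  shows "((\<lambda>s. G t s * \<phi> s) has_integral Gam G \<phi> t) {0..1}"
    "((\<lambda>s. G1 t s * \<phi> s) has_integral Gam G1 \<phi> t) {0..1}"
    "((\<lambda>s. G2 t s * \<phi> s) has_integral Gam G2 \<phi> t) {0..1}"
proof -
  obtain u u1 u2 where sol: "bvp3_sol a b c (\<lambda>t x y z. \<phi> t) u u1 u2" using sol_exists[OF \<phi>] by blast
  show "((\<lambda>s. G t s * \<phi> s) has_integral Gam G \<phi> t) {0..1}"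
    "((\<lambda>s. G1 t s * \<phi> s) has_integral Gam G1 \<phi> t) {0..1}"
    "((\<lambda>s. G2 t s * \<phi> s) has_integral Gam G2 \<phi> t) {0..1}"
    using sol_rep[OF \<phi> sol t] Gam_eq[OF \<phi> sol t] by auto
qed


lemma Gk_absint:
  assumes t: "t \<in> {0..1}"
  shows "G t absolutely_integrable_on {0..1}" "G1 t absolutely_integrable_on {0..1}"
    "G2 t absolutely_integrable_on {0..1}"
proof -
  show "G t absolutely_integrable_on {0..1}"
    by (rule absolutely_integrable_spike[OF Gs_absint(1)[OF green signG t] ae_G0[OF green signG t]]) auto
  show "G1 t absolutely_integrable_on {0..1}"
    by (rule absolutely_integrable_spike[OF Gs_absint(2)[OF green signG t] ae_G1[OF green signG t dG1]]) auto
  show "G2 t absolutely_integrable_on {0..1}"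
    by (rule absolutely_integrable_spike[OF Gs_absint(3)[OF green signG t] ae_G2[OF green signG t dG1 dG2]]) auto
qed

lemma abs_integrable:
  fixes f :: "real \<Rightarrow> real"
  assumes "f absolutely_integrable_on S"
  shows "(\<lambda>s. \<bar>f s\<bar>) integrable_on S"
  using set_lebesgue_integral_eq_integral(1)[OF set_integrable_abs[OF assms]] by simp

lemma Gk_abs_int:
  assumes t: "t \<in> {0..1}"
  shows "(\<lambda>s. \<bar>G t s\<bar>) integrable_on {0..1}" "(\<lambda>s. \<bar>G1 t s\<bar>) integrable_on {0..1}"
    "(\<lambda>s. \<bar>G2 t s\<bar>) integrable_on {0..1}"
  by (rule abs_integrable[OF Gk_absint(1)[OF t]], rule abs_integrable[OF Gk_absint(2)[OF t]],
      rule abs_integrable[OF Gk_absint(3)[OF t]])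


definition BB where "BB = integral {0..1} (\<lambda>s. \<bar>G 0 s\<bar> + \<bar>KB G s\<bar> + \<bar>KC G s\<bar> + 1)"

lemma Gk_int_bound:
  assumes t: "t \<in> {0..1}"
  shows "integral {0..1} (\<lambda>s. \<bar>G t s\<bar>) \<le> BB" "integral {0..1} (\<lambda>s. \<bar>G1 t s\<bar>) \<le> BB"
    "integral {0..1} (\<lambda>s. \<bar>G2 t s\<bar>) \<le> BB"
proof -
  have h0: "(0::real) \<in> {0..1}" by simp
  have a1: "(\<lambda>s. \<bar>G 0 s\<bar>) absolutely_integrable_on {0..1}"
    by (rule set_integrable_abs[OF G_absint[OF green signG h0]])
  have a2: "(\<lambda>s. \<bar>KB G s\<bar>) absolutely_integrable_on {0..1}"
    by (rule set_integrable_abs[OF Gs_absint(4)[OF green signG h0]])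
  have a3: "(\<lambda>s. \<bar>KC G s\<bar>) absolutely_integrable_on {0..1}"
    by (rule set_integrable_abs[OF Gs_absint(5)[OF green signG h0]])
  have a4: "(\<lambda>s::real. 1::real) absolutely_integrable_on {0..1}"
    by (rule absolutely_integrable_continuous_real) simp
  have "(\<lambda>s. \<bar>G 0 s\<bar> + \<bar>KB G s\<bar> + \<bar>KC G s\<bar> + 1) absolutely_integrable_on {0..1}"
    by (rule set_integral_add(1)[OF set_integral_add(1)[OF set_integral_add(1)[OF a1 a2] a3] a4])
  then have Bint: "(\<lambda>s. \<bar>G 0 s\<bar> + \<bar>KB G s\<bar> + \<bar>KC G s\<bar> + 1) integrable_on {0..1}"
    using set_lebesgue_integral_eq_integral(1) by blast
  have e0: "integral {0..1} (\<lambda>s. \<bar>G t s\<bar>) = integral {0..1} (\<lambda>s. \<bar>Gs0 G t s\<bar>)"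
    by (rule integral_spike[OF ae_G0[OF green signG t]]) auto
  have e1: "integral {0..1} (\<lambda>s. \<bar>G1 t s\<bar>) = integral {0..1} (\<lambda>s. \<bar>Gs1 G t s\<bar>)"
    by (rule integral_spike[OF ae_G1[OF green signG t dG1]]) auto
  have e2: "integral {0..1} (\<lambda>s. \<bar>G2 t s\<bar>) = integral {0..1} (\<lambda>s. \<bar>Gs2 G t s\<bar>)"
    by (rule integral_spike[OF ae_G2[OF green signG t dG1 dG2]]) auto
  have tri4: "\<bar>x + y + z + w\<bar> \<le> \<bar>x\<bar> + \<bar>y\<bar> + \<bar>z\<bar> + \<bar>w\<bar>" for x y z w :: real
    by (meson abs_triangle_ineq add_mono order_trans order_refl)
  have tri3: "\<bar>x + y + z\<bar> \<le> \<bar>x\<bar> + \<bar>y\<bar> + \<bar>z\<bar>" for x y z :: real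
    by (meson abs_triangle_ineq add_mono order_trans order_refl)
  have tri2: "\<bar>x + y\<bar> \<le> \<bar>x\<bar> + \<bar>y\<bar>" for x y :: real
    by (rule abs_triangle_ineq)
  have nn: "0 \<le> \<bar>G 0 s\<bar>" "0 \<le> \<bar>KB G s\<bar>" "0 \<le> \<bar>KC G s\<bar>" for s by auto
  have p0: "\<bar>Gs0 G t s\<bar> \<le> \<bar>G 0 s\<bar> + \<bar>KB G s\<bar> + \<bar>KC G s\<bar> + 1" if "s \<in> {0..1}" for s
  proof -
    have "\<bar>Gs0 G t s\<bar> \<le> \<bar>G 0 s\<bar> + \<bar>KB G s * t\<bar> + \<bar>KC G s * t^2/2\<bar> + \<bar>H0 t s\<bar>"
      unfolding Gs0_def by (rule tri4)
    then show ?thesis using abs_t_le[OF t, of "KB G s"] abs_t_le[OF t, of "KC G s"] H_le1(1)[OF t that]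
      by linarith
  qed
  have p1: "\<bar>Gs1 G t s\<bar> \<le> \<bar>G 0 s\<bar> + \<bar>KB G s\<bar> + \<bar>KC G s\<bar> + 1" if "s \<in> {0..1}" for s
  proof -
    have "\<bar>Gs1 G t s\<bar> \<le> \<bar>KB G s\<bar> + \<bar>KC G s * t\<bar> + \<bar>H1 t s\<bar>"
      unfolding Gs1_def by (rule tri3)
    then show ?thesis using abs_t_le[OF t, of "KC G s"] H_le1(2)[OF t that] nn[of s]
      by linarith
  qed
  have p2: "\<bar>Gs2 G t s\<bar> \<le> \<bar>G 0 s\<bar> + \<bar>KB G s\<bar> + \<bar>KC G s\<bar> + 1" if "s \<in> {0..1}" for s
  proof -
    have "\<bar>Gs2 G t s\<bar> \<le> \<bar>KC G s\<bar> + \<bar>H2 t s\<bar>"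
      unfolding Gs2_def by (rule tri2)
    then show ?thesis using H_le1(3)[OF t that] nn[of s] by linarith
  qed
  show "integral {0..1} (\<lambda>s. \<bar>G t s\<bar>) \<le> BB" unfolding e0 BB_def
    by (rule integral_le[OF abs_integrable[OF Gs_absint(1)[OF green signG t]] Bint p0])
  show "integral {0..1} (\<lambda>s. \<bar>G1 t s\<bar>) \<le> BB" unfolding e1 BB_def
    by (rule integral_le[OF abs_integrable[OF Gs_absint(2)[OF green signG t]] Bint p1])
  show "integral {0..1} (\<lambda>s. \<bar>G2 t s\<bar>) \<le> BB" unfolding e2 BB_def
    by (rule integral_le[OF abs_integrable[OF Gs_absint(3)[OF green signG t]] Bint p2])
qed

lemma Mk_upper:
  assumes t: "t \<in> {0..1}"
  shows "integral {0..1} (\<lambda>s. \<bar>G t s\<bar>) \<le> Mnorm G" "integral {0..1} (\<lambda>s. \<bar>G1 t s\<bar>) \<le> Mnorm G1"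
    "integral {0..1} (\<lambda>s. \<bar>G2 t s\<bar>) \<le> Mnorm G2"
  using Mnorm_upper[OF Gk_int_bound(1) t] Mnorm_upper[OF Gk_int_bound(2) t] Mnorm_upper[OF Gk_int_bound(3) t]
  by auto

lemma Mk_nonneg: "0 \<le> Mnorm G" "0 \<le> Mnorm G1" "0 \<le> Mnorm G2"
  using Mnorm_nonneg[OF Gk_int_bound(1)] Mnorm_nonneg[OF Gk_int_bound(2)] Mnorm_nonneg[OF Gk_int_bound(3)]
  by auto


lemma sig_mult: "sigma H * sigma H = 1" "\<bar>sigma H\<bar> = 1"
  using sigma_cases[of H] by auto

lemma Gam_bounds:
  assumes \<phi>: "continuous_on {0..1} \<phi>"
    and bnd: "\<And>t. t \<in> {0..1} \<Longrightarrow> 0 \<le> sigma G * \<phi> t \<and> sigma G * \<phi> t \<le> M"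
    and t: "t \<in> {0..1}"
  shows "0 \<le> Gam G \<phi> t \<and> Gam G \<phi> t \<le> Mnorm G * M"
    "0 \<le> sigma G * sigma G1 * Gam G1 \<phi> t \<and> sigma G * sigma G1 * Gam G1 \<phi> t \<le> Mnorm G1 * M"
    "\<bar>Gam G2 \<phi> t\<bar> \<le> Mnorm G2 * M"
proof -
  have M: "0 \<le> M" using bnd[of 0] by auto
  have absphi: "\<bar>\<phi> s\<bar> \<le> M" if "s \<in> {0..1}" for s
  proof -
    have "\<bar>\<phi> s\<bar> = \<bar>sigma G * \<phi> s\<bar>" by (simp add: abs_mult sig_mult)
    then show ?thesis using bnd[OF that] by simp
  qed
  have "0 \<le> Gam G \<phi> t \<and> Gam G \<phi> t \<le> integral {0..1} (\<lambda>s. \<bar>G t s\<bar>) * M"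
  proof (rule int_bounds[OF Gam_has(1)[OF \<phi> t] Gk_abs_int(1)[OF t]])
    fix s :: real assume s: "s \<in> {0..1}"
    have "G t s * \<phi> s = (sigma G * \<bar>G t s\<bar>) * \<phi> s"
      using arg_cong[OF sigma_abs[OF signG t s], of "\<lambda>x. x * \<phi> s"] .
    also have "\<dots> = \<bar>G t s\<bar> * (sigma G * \<phi> s)" by (simp add: algebra_simps)
    finally have e: "G t s * \<phi> s = \<bar>G t s\<bar> * (sigma G * \<phi> s)" .
    show "0 \<le> G t s * \<phi> s \<and> G t s * \<phi> s \<le> \<bar>G t s\<bar> * M"
      unfolding e using bnd[OF s] by (auto intro: mult_left_mono)
  qed
  moreover have "integral {0..1} (\<lambda>s. \<bar>G t s\<bar>) * M \<le> Mnorm G * M"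
    using Mk_upper(1)[OF t] M by (rule mult_right_mono)
  ultimately show "0 \<le> Gam G \<phi> t \<and> Gam G \<phi> t \<le> Mnorm G * M" by linarith
  have "0 \<le> sigma G * sigma G1 * Gam G1 \<phi> t \<and> sigma G * sigma G1 * Gam G1 \<phi> t \<le> integral {0..1} (\<lambda>s. \<bar>G1 t s\<bar>) * M"
  proof (rule int_bounds[OF has_integral_mult_right[OF Gam_has(2)[OF \<phi> t]] Gk_abs_int(2)[OF t]])
    fix s :: real assume s: "s \<in> {0..1}"
    have "sigma G * sigma G1 * (G1 t s * \<phi> s) = sigma G * sigma G1 * ((sigma G1 * \<bar>G1 t s\<bar>) * \<phi> s)"
      using arg_cong[OF sigma_abs[OF signG1 t s], of "\<lambda>x. sigma G * sigma G1 * (x * \<phi> s)"] .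
    also have "\<dots> = (sigma G1 * sigma G1) * (\<bar>G1 t s\<bar> * (sigma G * \<phi> s))" by (simp add: algebra_simps)
    also have "\<dots> = \<bar>G1 t s\<bar> * (sigma G * \<phi> s)" by (simp add: sig_mult)
    finally have e: "sigma G * sigma G1 * (G1 t s * \<phi> s) = \<bar>G1 t s\<bar> * (sigma G * \<phi> s)" .
    show "0 \<le> sigma G * sigma G1 * (G1 t s * \<phi> s) \<and> sigma G * sigma G1 * (G1 t s * \<phi> s) \<le> \<bar>G1 t s\<bar> * M"
      unfolding e using bnd[OF s] by (auto intro: mult_left_mono)
  qed
  moreover have "integral {0..1} (\<lambda>s. \<bar>G1 t s\<bar>) * M \<le> Mnorm G1 * M"
    using Mk_upper(2)[OF t] M by (rule mult_right_mono)
  ultimately show "0 \<le> sigma G * sigma G1 * Gam G1 \<phi> t \<and> sigma G * sigma G1 * Gam G1 \<phi> t \<le> Mnorm G1 * M"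
    by linarith
  have "\<bar>Gam G2 \<phi> t\<bar> \<le> integral {0..1} (\<lambda>s. \<bar>G2 t s\<bar>) * M"
  proof (rule int_abs_bound[OF Gam_has(3)[OF \<phi> t] Gk_abs_int(3)[OF t]])
    fix s :: real assume s: "s \<in> {0..1}"
    show "\<bar>G2 t s * \<phi> s\<bar> \<le> \<bar>G2 t s\<bar> * M"
      unfolding abs_mult using absphi[OF s] by (intro mult_left_mono) auto
  qed
  moreover have "integral {0..1} (\<lambda>s. \<bar>G2 t s\<bar>) * M \<le> Mnorm G2 * M"
    using Mk_upper(3)[OF t] M by (rule mult_right_mono)
  ultimately show "\<bar>Gam G2 \<phi> t\<bar> \<le> Mnorm G2 * M" by linarith
qed

lemma Gam_lip:
  assumes \<phi>: "continuous_on {0..1} \<phi>" and \<psi>: "continuous_on {0..1} \<psi>"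
    and d: "\<And>t. t \<in> {0..1} \<Longrightarrow> \<bar>\<phi> t - \<psi> t\<bar> \<le> d" and t: "t \<in> {0..1}"
  shows "\<bar>Gam G \<phi> t - Gam G \<psi> t\<bar> \<le> Mnorm G * d"
    "\<bar>Gam G1 \<phi> t - Gam G1 \<psi> t\<bar> \<le> Mnorm G1 * d"
    "\<bar>Gam G2 \<phi> t - Gam G2 \<psi> t\<bar> \<le> Mnorm G2 * d"
proof -
  have d0: "0 \<le> d" using d[of 0] by auto
  show "\<bar>Gam G \<phi> t - Gam G \<psi> t\<bar> \<le> Mnorm G * d"
    by (rule lip_generic[OF Gam_has(1)[OF \<phi> t] Gam_has(1)[OF \<psi> t] Gk_abs_int(1)[OF t] d Mk_upper(1)[OF t] d0])
  show "\<bar>Gam G1 \<phi> t - Gam G1 \<psi> t\<bar> \<le> Mnorm G1 * d"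
    by (rule lip_generic[OF Gam_has(2)[OF \<phi> t] Gam_has(2)[OF \<psi> t] Gk_abs_int(2)[OF t] d Mk_upper(2)[OF t] d0])
  show "\<bar>Gam G2 \<phi> t - Gam G2 \<psi> t\<bar> \<le> Mnorm G2 * d"
    by (rule lip_generic[OF Gam_has(3)[OF \<phi> t] Gam_has(3)[OF \<psi> t] Gk_abs_int(3)[OF t] d Mk_upper(3)[OF t] d0])
qed


lemma Gam_cont:
  assumes \<phi>: "continuous_on {0..1} \<phi>"
  shows "continuous_on {0..1} (Gam G \<phi>)" "continuous_on {0..1} (Gam G1 \<phi>)" "continuous_on {0..1} (Gam G2 \<phi>)"
proof -
  obtain u u1 u2 where sol: "bvp3_sol a b c (\<lambda>t x y z. \<phi> t) u u1 u2" using sol_exists[OF \<phi>] by blast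
  then have d: "derivs2 u u1 u2" and c2: "continuous_on {0..1} u2" unfolding bvp3_sol_def by auto
  have cu: "continuous_on {0..1} u" by (rule DERIV_continuous_on) (use d in \<open>auto simp: derivs2_def\<close>)
  have cu1: "continuous_on {0..1} u1" by (rule DERIV_continuous_on) (use d in \<open>auto simp: derivs2_def\<close>)
  show "continuous_on {0..1} (Gam G \<phi>)" by (rule continuous_on_eq[OF cu]) (use Gam_eq[OF \<phi> sol] in auto)
  show "continuous_on {0..1} (Gam G1 \<phi>)" by (rule continuous_on_eq[OF cu1]) (use Gam_eq[OF \<phi> sol] in auto)
  show "continuous_on {0..1} (Gam G2 \<phi>)" by (rule continuous_on_eq[OF c2]) (use Gam_eq[OF \<phi> sol] in auto)
qed


lemma main:
  fixes f :: "real \<Rightarrow> real \<Rightarrow> real \<Rightarrow> real \<Rightarrow> real" and M L0 L1 L2 :: real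
  assumes Mpos: "M > 0" and L: "L0 \<ge> 0" "L1 \<ge> 0" "L2 \<ge> 0"
    and fcont: "continuous_on (DMplus (Mnorm G) (Mnorm G1) (Mnorm G2) (sigma G) (sigma G1) M)
                  (\<lambda>(t, x, y, z). f t x y z)"
    and fbound: "\<And>t x y z. (t, x, y, z) \<in> DMplus (Mnorm G) (Mnorm G1) (Mnorm G2) (sigma G) (sigma G1) M
                  \<Longrightarrow> 0 \<le> sigma G * f t x y z \<and> sigma G * f t x y z \<le> M"
    and flip: "\<And>t x1 y1 z1 x2 y2 z2.
                  (t, x1, y1, z1) \<in> DMplus (Mnorm G) (Mnorm G1) (Mnorm G2) (sigma G) (sigma G1) M \<Longrightarrow>
                  (t, x2, y2, z2) \<in> DMplus (Mnorm G) (Mnorm G1) (Mnorm G2) (sigma G) (sigma G1) M \<Longrightarrow>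
                  \<bar>f t x2 y2 z2 - f t x1 y1 z1\<bar> \<le> L0 * \<bar>x2 - x1\<bar> + L1 * \<bar>y2 - y1\<bar> + L2 * \<bar>z2 - z1\<bar>"
    and q: "L0 * Mnorm G + L1 * Mnorm G1 + L2 * Mnorm G2 < 1"
  shows "\<exists>u u1 u2.
           bvp3_sol a b c f u u1 u2 \<and>
           (\<forall>t\<in>{0..1}. 0 \<le> u t \<and> u t \<le> Mnorm G * M \<and>
               0 \<le> sigma G * sigma G1 * u1 t \<and> sigma G * sigma G1 * u1 t \<le> Mnorm G1 * M \<and>
               \<bar>u2 t\<bar> \<le> Mnorm G2 * M) \<and>
           (mono_on {0..1} u \<or> antimono_on {0..1} u) \<and>
           (\<forall>v v1 v2. bvp3_sol a b c f v v1 v2 \<and>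
               (\<forall>t\<in>{0..1}. 0 \<le> v t \<and> v t \<le> Mnorm G * M \<and>
                  0 \<le> sigma G * sigma G1 * v1 t \<and> sigma G * sigma G1 * v1 t \<le> Mnorm G1 * M \<and>
                  \<bar>v2 t\<bar> \<le> Mnorm G2 * M)
             \<longrightarrow> (\<forall>t\<in>{0..1}. v t = u t))"
proof -
  define D where "D = DMplus (Mnorm G) (Mnorm G1) (Mnorm G2) (sigma G) (sigma G1) M"
  define qq where "qq = L0 * Mnorm G + L1 * Mnorm G1 + L2 * Mnorm G2"
  define F where "F \<phi> t = f t (Gam G \<phi> t) (Gam G1 \<phi> t) (Gam G2 \<phi> t)" for \<phi> :: "real \<Rightarrow> real" and t :: real
  define BND where "BND \<phi> \<longleftrightarrow> continuous_on {0..1} \<phi> \<and>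
      (\<forall>t\<in>{0..1}. 0 \<le> sigma G * \<phi> t \<and> sigma G * \<phi> t \<le> M)" for \<phi> :: "real \<Rightarrow> real"
  have q0: "0 \<le> qq" unfolding qq_def using L Mk_nonneg by (intro add_nonneg_nonneg mult_nonneg_nonneg) auto
  have q1: "qq < 1" using q by (simp add: qq_def)
  have M0: "0 \<le> M" using Mpos by simp
  have inD: "(t, Gam G \<phi> t, Gam G1 \<phi> t, Gam G2 \<phi> t) \<in> D" if B: "BND \<phi>" and t: "t \<in> {0..1}" for \<phi> :: "real \<Rightarrow> real" and t :: real
  proof -
    have \<phi>c: "continuous_on {0..1} \<phi>" and bnd: "\<And>t. t \<in> {0..1} \<Longrightarrow> 0 \<le> sigma G * \<phi> t \<and> sigma G * \<phi> t \<le> M"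
      using B unfolding BND_def by auto
    show ?thesis using Gam_bounds[OF \<phi>c bnd t] t unfolding D_def DMplus_def by auto
  qed
  have Fcont: "continuous_on {0..1} (F \<phi>)" if B: "BND \<phi>" for \<phi> :: "real \<Rightarrow> real"
  proof -
    have \<phi>c: "continuous_on {0..1} \<phi>" using B unfolding BND_def by auto
    have ct: "continuous_on {0..1} (\<lambda>t. (t, Gam G \<phi> t, Gam G1 \<phi> t, Gam G2 \<phi> t))"
      by (intro continuous_on_Pair continuous_on_id Gam_cont[OF \<phi>c])
    have "continuous_on {0..1} (\<lambda>t. (\<lambda>(t, x, y, z). f t x y z) (t, Gam G \<phi> t, Gam G1 \<phi> t, Gam G2 \<phi> t))"
      by (rule continuous_on_compose2[OF fcont ct]) (use inD[OF B] in \<open>auto simp: D_def\<close>)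
    then show ?thesis by (rule continuous_on_eq) (simp add: F_def)
  qed
  have Fbnd: "0 \<le> sigma G * F \<phi> t \<and> sigma G * F \<phi> t \<le> M" if B: "BND \<phi>" and t: "t \<in> {0..1}" for \<phi> :: "real \<Rightarrow> real" and t :: real
    unfolding F_def by (rule fbound) (use inD[OF B t] in \<open>simp add: D_def\<close>)
  have Flip: "\<bar>F \<phi> t - F \<psi> t\<bar> \<le> qq * d"
    if B1: "BND \<phi>" and B2: "BND \<psi>" and d: "\<And>t. t \<in> {0..1} \<Longrightarrow> \<bar>\<phi> t - \<psi> t\<bar> \<le> d" and t: "t \<in> {0..1}"
    for \<phi> \<psi> :: "real \<Rightarrow> real" and d t :: real
  proof -
    have \<phi>c: "continuous_on {0..1} \<phi>" and \<psi>c: "continuous_on {0..1} \<psi>" using B1 B2 unfolding BND_def by auto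
    have "\<bar>F \<phi> t - F \<psi> t\<bar> \<le> L0 * \<bar>Gam G \<phi> t - Gam G \<psi> t\<bar> + L1 * \<bar>Gam G1 \<phi> t - Gam G1 \<psi> t\<bar>
        + L2 * \<bar>Gam G2 \<phi> t - Gam G2 \<psi> t\<bar>"
      unfolding F_def by (rule flip) (use inD[OF B1 t] inD[OF B2 t] in \<open>simp_all add: D_def\<close>)
    also have "\<dots> \<le> L0 * (Mnorm G * d) + L1 * (Mnorm G1 * d) + L2 * (Mnorm G2 * d)"
      using Gam_lip[OF \<phi>c \<psi>c d t] L by (intro add_mono mult_left_mono) auto
    also have "\<dots> = qq * d" by (simp add: qq_def algebra_simps)
    finally show ?thesis .
  qed
  define cl where "cl t = max 0 (min 1 t)" for t :: real
  have cl01: "cl t \<in> {0..1}" for t unfolding cl_def by auto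
  have clid: "t \<in> {0..1} \<Longrightarrow> cl t = t" for t unfolding cl_def by auto
  have clc: "continuous_on UNIV cl" unfolding cl_def[abs_def] by (intro continuous_intros)
  define K where "K = PiC (UNIV :: real set) (\<lambda>t. {y::real. 0 \<le> sigma G * y \<and> sigma G * y \<le> M})"
  have Kmem: "g \<in> K \<longleftrightarrow> (\<forall>t. 0 \<le> sigma G * apply_bcontfun g t \<and> sigma G * apply_bcontfun g t \<le> M)" for g :: "real \<Rightarrow>\<^sub>C real"
    unfolding K_def mem_PiC_iff by (auto simp: Pi_iff)
  have BNDK: "BND (apply_bcontfun g)" if "g \<in> K" for g :: "real \<Rightarrow>\<^sub>C real"
    using that unfolding Kmem BND_def by auto
  define T where "T g = Bcontfun (\<lambda>t. F (apply_bcontfun g) (cl t))" for g :: "real \<Rightarrow>\<^sub>C real"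
  have Tin: "(\<lambda>t. F (apply_bcontfun g) (cl t)) \<in> bcontfun" if gK: "g \<in> K" for g :: "real \<Rightarrow>\<^sub>C real"
  proof (rule bcontfun_normI)
    show "continuous_on UNIV (\<lambda>t. F (apply_bcontfun g) (cl t))"
      by (rule continuous_on_compose2[OF Fcont[OF BNDK[OF gK]] clc]) (use cl01 in auto)
    fix t
    have "\<bar>F (apply_bcontfun g) (cl t)\<bar> = \<bar>sigma G * F (apply_bcontfun g) (cl t)\<bar>"
      by (simp add: abs_mult sig_mult)
    then show "norm (F (apply_bcontfun g) (cl t)) \<le> M" using Fbnd[OF BNDK[OF gK] cl01[of t]] by simp
  qed
  have Tapp: "apply_bcontfun (T g) t = F (apply_bcontfun g) (cl t)" if "g \<in> K" for g :: "real \<Rightarrow>\<^sub>C real" and t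
    unfolding T_def using Bcontfun_inverse[OF Tin[OF that]] by simp
  have TK: "T ` K \<subseteq> K"
  proof
    fix h assume "h \<in> T ` K"
    then obtain g where gK: "g \<in> K" and h: "h = T g" by blast
    show "h \<in> K" unfolding Kmem h Tapp[OF gK] using Fbnd[OF BNDK[OF gK] cl01] by auto
  qed
  have Tlip: "dist (T g) (T h) \<le> qq * dist g h" if gK: "g \<in> K" and hK: "h \<in> K" for g h :: "real \<Rightarrow>\<^sub>C real"
  proof (rule dist_bound)
    fix x
    have "\<bar>apply_bcontfun g t - apply_bcontfun h t\<bar> \<le> dist g h" for t
      using dist_bounded[of g t h] by (simp add: dist_real_def)
    then have "\<bar>F (apply_bcontfun g) (cl x) - F (apply_bcontfun h) (cl x)\<bar> \<le> qq * dist g h"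
      by (intro Flip BNDK gK hK cl01)
    then show "dist (apply_bcontfun (T g) x) (apply_bcontfun (T h) x) \<le> qq * dist g h"
      by (simp add: Tapp[OF gK] Tapp[OF hK] dist_real_def)
  qed
  have cK: "complete K"
    unfolding complete_eq_closed K_def
    by (intro closed_PiC closed_Collect_conj closed_Collect_le continuous_intros)
  have K0: "K \<noteq> {}"
  proof -
    have "(0 :: real \<Rightarrow>\<^sub>C real) \<in> K" unfolding Kmem using M0 by simp
    then show ?thesis by blast
  qed
  obtain g where gK: "g \<in> K" and gfix: "T g = g"
    using Banach_fix[OF cK K0 q0 q1 TK Tlip] by blast
  define \<phi> where "\<phi> = apply_bcontfun g"
  have B\<phi>: "BND \<phi>" unfolding \<phi>_def by (rule BNDK[OF gK])
  have \<phi>c: "continuous_on {0..1} \<phi>" and \<phi>b: "\<And>t. t \<in> {0..1} \<Longrightarrow> 0 \<le> sigma G * \<phi> t \<and> sigma G * \<phi> t \<le> M"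
    using B\<phi> unfolding BND_def by auto
  have \<phi>fix: "\<phi> t = F \<phi> t" if t: "t \<in> {0..1}" for t
  proof -
    have "\<phi> t = apply_bcontfun (T g) t" unfolding \<phi>_def gfix ..
    also have "\<dots> = F \<phi> t" using Tapp[OF gK, of t] clid[OF t] by (simp add: \<phi>_def)
    finally show ?thesis .
  qed
  obtain u u1 u2 where sol: "bvp3_sol a b c (\<lambda>t x y z. \<phi> t) u u1 u2" using sol_exists[OF \<phi>c] by blast
  note ueq = Gam_eq[OF \<phi>c sol]
  have ubnd: "\<forall>t\<in>{0..1}. 0 \<le> u t \<and> u t \<le> Mnorm G * M \<and>
               0 \<le> sigma G * sigma G1 * u1 t \<and> sigma G * sigma G1 * u1 t \<le> Mnorm G1 * M \<and>
               \<bar>u2 t\<bar> \<le> Mnorm G2 * M"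
    using Gam_bounds[OF \<phi>c \<phi>b] ueq by auto
  have usol: "bvp3_sol a b c f u u1 u2"
  proof -
    have "(u2 has_real_derivative f t (u t) (u1 t) (u2 t)) (at t)" if t: "t \<in> {0<..<1}" for t
    proof -
      have t': "t \<in> {0..1}" using t by auto
      have "(u2 has_real_derivative \<phi> t) (at t)" using sol t unfolding bvp3_sol_def by auto
      moreover have "\<phi> t = f t (u t) (u1 t) (u2 t)" using \<phi>fix[OF t'] ueq[OF t'] by (simp add: F_def)
      ultimately show ?thesis by simp
    qed
    then show ?thesis using sol unfolding bvp3_sol_def by auto
  qed
  have du: "(u has_real_derivative u1 x) (at x within {0..1})" if "x \<in> {0..1}" for x
    using sol that unfolding bvp3_sol_def derivs2_def by auto
  have umono: "mono_on {0..1} u \<or> antimono_on {0..1} u"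
  proof (cases "sigma G * sigma G1 = 1")
    case True
    then have "0 \<le> u1 x" if "x \<in> {0..1}" for x using ubnd that by auto
    then show ?thesis using mono_from_deriv[OF du] by auto
  next
    case False
    then have "sigma G * sigma G1 = -1" using sigma_cases[of G] sigma_cases[of G1] by auto
    then have "u1 x \<le> 0" if "x \<in> {0..1}" for x using ubnd that by fastforce
    then show ?thesis using antimono_from_deriv[OF du] by auto
  qed
  have uniq: "\<forall>t\<in>{0..1}. v t = u t"
    if vsol: "bvp3_sol a b c f v v1 v2"
      and vb: "\<forall>t\<in>{0..1}. 0 \<le> v t \<and> v t \<le> Mnorm G * M \<and>
                  0 \<le> sigma G * sigma G1 * v1 t \<and> sigma G * sigma G1 * v1 t \<le> Mnorm G1 * M \<and>
                  \<bar>v2 t\<bar> \<le> Mnorm G2 * M" for v v1 v2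
  proof -
    define \<psi> where "\<psi> t = f t (v t) (v1 t) (v2 t)" for t
    have vD: "(t, v t, v1 t, v2 t) \<in> D" if "t \<in> {0..1}" for t
      using vb that unfolding D_def DMplus_def by auto
    have dv: "derivs2 v v1 v2" and cv2: "continuous_on {0..1} v2" using vsol unfolding bvp3_sol_def by auto
    have cv: "continuous_on {0..1} v" by (rule DERIV_continuous_on) (use dv in \<open>auto simp: derivs2_def\<close>)
    have cv1: "continuous_on {0..1} v1" by (rule DERIV_continuous_on) (use dv in \<open>auto simp: derivs2_def\<close>)
    have ct: "continuous_on {0..1} (\<lambda>t. (t, v t, v1 t, v2 t))"
      by (intro continuous_on_Pair continuous_on_id cv cv1 cv2)
    have "continuous_on {0..1} (\<lambda>t. (\<lambda>(t, x, y, z). f t x y z) (t, v t, v1 t, v2 t))"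
      by (rule continuous_on_compose2[OF fcont ct]) (use vD in \<open>auto simp: D_def\<close>)
    then have \<psi>c: "continuous_on {0..1} \<psi>" by (rule continuous_on_eq) (simp add: \<psi>_def)
    have \<psi>b: "0 \<le> sigma G * \<psi> t \<and> sigma G * \<psi> t \<le> M" if "t \<in> {0..1}" for t
      unfolding \<psi>_def by (rule fbound) (use vD[OF that] in \<open>simp add: D_def\<close>)
    have B\<psi>: "BND \<psi>" using \<psi>c \<psi>b unfolding BND_def by auto
    have vsol': "bvp3_sol a b c (\<lambda>t x y z. \<psi> t) v v1 v2"
      using vsol unfolding bvp3_sol_def \<psi>_def by auto
    note veq = Gam_eq[OF \<psi>c vsol']
    have \<psi>fix: "\<psi> t = F \<psi> t" if t: "t \<in> {0..1}" for t
    proof -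
      have "F \<psi> t = f t (v t) (v1 t) (v2 t)" unfolding F_def using veq[OF t] by simp
      then show ?thesis by (simp add: \<psi>_def)
    qed
    have it: "\<forall>t\<in>{0..1}. \<bar>\<psi> t - \<phi> t\<bar> \<le> qq ^ n * M" for n
    proof (induction n)
      case 0
      show ?case
      proof
        fix t :: real assume t: "t \<in> {0..1}"
        have "\<bar>\<psi> t - \<phi> t\<bar> = \<bar>sigma G * \<psi> t - sigma G * \<phi> t\<bar>"
          by (simp add: abs_mult sig_mult right_diff_distrib[symmetric])
        then show "\<bar>\<psi> t - \<phi> t\<bar> \<le> qq ^ 0 * M" using \<psi>b[OF t] \<phi>b[OF t] by (simp add: abs_le_iff)
      qed
    next
      case (Suc n)
      show ?case
      proof
        fix t :: real assume t: "t \<in> {0..1}"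
        have "\<bar>F \<psi> t - F \<phi> t\<bar> \<le> qq * (qq ^ n * M)"
          by (rule Flip[OF B\<psi> B\<phi> _ t]) (use Suc in auto)
        then show "\<bar>\<psi> t - \<phi> t\<bar> \<le> qq ^ Suc n * M" using \<psi>fix[OF t] \<phi>fix[OF t] by simp
      qed
    qed
    have eq: "\<psi> t = \<phi> t" if t: "t \<in> {0..1}" for t
    proof -
      have "(\<lambda>n. qq ^ n * M) \<longlonglongrightarrow> 0 * M"
        by (intro tendsto_mult tendsto_const LIMSEQ_power_zero) (use q0 q1 in auto)
      then have lim: "(\<lambda>n. qq ^ n * M) \<longlonglongrightarrow> 0" by simp
      have "\<bar>\<psi> t - \<phi> t\<bar> \<le> 0" by (rule LIMSEQ_le_const[OF lim]) (use it t in auto)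
      then show ?thesis by simp
    qed
    show ?thesis
    proof
      fix t :: real assume t: "t \<in> {0..1}"
      have "Gam G \<psi> t = Gam G \<phi> t" unfolding Gam_def by (rule integral_cong) (use eq in auto)
      then show "v t = u t" using veq[OF t] ueq[OF t] by simp
    qed
  qed
  show ?thesis
    by (rule exI[of _ u], rule exI[of _ u1], rule exI[of _ u2]) (use usol ubnd umono uniq in blast)
qed

end


theorem theorem4:
  fixes a b c :: "nat \<Rightarrow> real"
    and G G1 G2 :: "real \<Rightarrow> real \<Rightarrow> real"
    and f :: "real \<Rightarrow> real \<Rightarrow> real \<Rightarrow> real \<Rightarrow> real"
    and M L0 L1 L2 :: real
  assumes rank3: "rank (bc_matrix a b c) = 3"
    and green: "green3 a b c G"
    and G1: "\<And>t s. t \<in> {0..1} \<Longrightarrow> s \<in> {0..1} \<Longrightarrow>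
               ((\<lambda>t. G t s) has_real_derivative G1 t s) (at t within {0..1})"
    and G2: "\<And>t s. t \<in> {0..1} \<Longrightarrow> s \<in> {0..1} \<Longrightarrow> t \<noteq> s \<Longrightarrow>
               ((\<lambda>t. G1 t s) has_real_derivative G2 t s) (at t within {0..1})"
    and signG: "const_sign G" and signG1: "const_sign G1"
    and Mpos: "M > 0" and L: "L0 \<ge> 0" "L1 \<ge> 0" "L2 \<ge> 0"
    and fcont: "continuous_on (DMplus (Mnorm G) (Mnorm G1) (Mnorm G2) (sigma G) (sigma G1) M)
                  (\<lambda>(t, x, y, z). f t x y z)"
    and fbound: "\<And>t x y z. (t, x, y, z) \<in> DMplus (Mnorm G) (Mnorm G1) (Mnorm G2) (sigma G) (sigma G1) M
                  \<Longrightarrow> 0 \<le> sigma G * f t x y z \<and> sigma G * f t x y z \<le> M"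
    and flip: "\<And>t x1 y1 z1 x2 y2 z2.
                  (t, x1, y1, z1) \<in> DMplus (Mnorm G) (Mnorm G1) (Mnorm G2) (sigma G) (sigma G1) M \<Longrightarrow>
                  (t, x2, y2, z2) \<in> DMplus (Mnorm G) (Mnorm G1) (Mnorm G2) (sigma G) (sigma G1) M \<Longrightarrow>
                  \<bar>f t x2 y2 z2 - f t x1 y1 z1\<bar> \<le> L0 * \<bar>x2 - x1\<bar> + L1 * \<bar>y2 - y1\<bar> + L2 * \<bar>z2 - z1\<bar>"
    and q: "L0 * Mnorm G + L1 * Mnorm G1 + L2 * Mnorm G2 < 1"
  shows "\<exists>u u1 u2.
           bvp3_sol a b c f u u1 u2 \<and>
           (\<forall>t\<in>{0..1}. 0 \<le> u t \<and> u t \<le> Mnorm G * M \<and>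
               0 \<le> sigma G * sigma G1 * u1 t \<and> sigma G * sigma G1 * u1 t \<le> Mnorm G1 * M \<and>
               \<bar>u2 t\<bar> \<le> Mnorm G2 * M) \<and>
           (mono_on {0..1} u \<or> antimono_on {0..1} u) \<and>
           (\<forall>v v1 v2. bvp3_sol a b c f v v1 v2 \<and>
               (\<forall>t\<in>{0..1}. 0 \<le> v t \<and> v t \<le> Mnorm G * M \<and>
                  0 \<le> sigma G * sigma G1 * v1 t \<and> sigma G * sigma G1 * v1 t \<le> Mnorm G1 * M \<and>
                  \<bar>v2 t\<bar> \<le> Mnorm G2 * M)
             \<longrightarrow> (\<forall>t\<in>{0..1}. v t = u t))"
  by (rule main[OF green G1 G2 signG signG1 Mpos L fcont fbound flip q])

end
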